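(* Let $R_1$ and $R_2$ be (not necessarily finite) commutative local rings with identity, let $I_1\neq R_1$ be an ideal of $R_1$ and $I_2\neq R_2$ an ideal of $R_2$, and put $R=R_1\times R_2$, $I=I_1\times I_2$. If there exist vertices $x,y$ of $\Gamma''_{I_1}(R_1)$ that are adjacent in $\Gamma''_{I_1}(R_1)$, or there exist vertices $x,y$ of $\Gamma''_{I_2}(R_2)$ that are adjacent in $\Gamma''_{I_2}(R_2)$, then $\Gamma''_I(R)$ is not planar.
   Context: $R_1\times R_2$ has componentwise operations. For a commutative ring $S$ and an ideal $J$ of $S$, $\Gamma''_J(S)$ is the simple undirected graph whose vertex set is $\{x\in S\setminus J : xS+J\neq S\}$, and two distinct vertices $x,y$ are adjacent if and only if $x\notin yS+J$ and $y\notin xS+J$. A graph is planar if it can be drawn in the plane with edges meeting only at their endpoints. *)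

theory Defs
  imports "HOL-Analysis.Analysis" "HOL-Algebra.Algebra"
begin

definition local_cring :: "('a, 'm) ring_scheme \<Rightarrow> bool" where
  "local_cring R \<longleftrightarrow> cring R \<and> (\<exists>!M. maximalideal M R)"

definition elt_plus_ideal :: "('a, 'm) ring_scheme \<Rightarrow> 'a \<Rightarrow> 'a set \<Rightarrow> 'a set" where
  "elt_plus_ideal S x J = {x \<otimes>\<^bsub>S\<^esub> s \<oplus>\<^bsub>S\<^esub> j | s j. s \<in> carrier S \<and> j \<in> J}"

definition gverts :: "('a, 'm) ring_scheme \<Rightarrow> 'a set \<Rightarrow> 'a set" where
  "gverts S J = {x \<in> carrier S - J. elt_plus_ideal S x J \<noteq> carrier S}"

definition gadj :: "('a, 'm) ring_scheme \<Rightarrow> 'a set \<Rightarrow> 'a \<Rightarrow> 'a \<Rightarrow> bool" where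
  "gadj S J x y \<longleftrightarrow> x \<in> gverts S J \<and> y \<in> gverts S J \<and> x \<noteq> y \<and>
     x \<notin> elt_plus_ideal S y J \<and> y \<notin> elt_plus_ideal S x J"

definition planar :: "'v set \<Rightarrow> ('v \<Rightarrow> 'v \<Rightarrow> bool) \<Rightarrow> bool" where
  "planar V E \<longleftrightarrow> (\<exists>(f :: 'v \<Rightarrow> complex) (\<gamma> :: 'v \<Rightarrow> 'v \<Rightarrow> real \<Rightarrow> complex).
     inj_on f V \<and>
     (\<forall>u v. E u v \<longrightarrow> arc (\<gamma> u v) \<and> pathstart (\<gamma> u v) = f u \<and> pathfinish (\<gamma> u v) = f v) \<and>
     (\<forall>u v w. E u v \<and> w \<in> V \<and> f w \<in> path_image (\<gamma> u v) \<longrightarrow> w = u \<or> w = v) \<and>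
     (\<forall>u v a b. E u v \<and> E a b \<and> {u, v} \<noteq> {a, b} \<longrightarrow>
        path_image (\<gamma> u v) \<inter> path_image (\<gamma> a b) \<subseteq> f ` ({u, v} \<inter> {a, b})))"

end

theory Submission
  imports Defs
begin

lemma conn_inside:
  fixes K :: "complex set"
  assumes "connected T" "T \<inter> K = {}" "z \<in> T" "z \<in> inside K"
  shows "T \<subseteq> inside K"
proof
  fix w assume "w \<in> T"
  have "connected_component (- K) z w"
    unfolding connected_component_def using assms \<open>w \<in> T\<close> by blast
  then show "w \<in> inside K" using inside_same_component assms(4) by blast
qed

lemma conn_outside:
  fixes K :: "complex set"
  assumes "connected T" "T \<inter> K = {}" "z \<in> T" "z \<in> outside K"
  shows "T \<subseteq> outside K"
proof
  fix w assume "w \<in> T"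
  have "connected_component (- K) z w"
    unfolding connected_component_def using assms \<open>w \<in> T\<close> by blast
  then show "w \<in> outside K" using outside_same_component assms(4) by blast
qed

lemma connected_arc_minus_finish:
  fixes g :: "real \<Rightarrow> complex"
  assumes "arc g"
  shows "connected (path_image g - {pathfinish g})"
proof -
  have "path_image g - {pathfinish g} = g ` {0..<1}"
  proof (intro equalityI subsetI)
    fix w assume "w \<in> path_image g - {pathfinish g}"
    then obtain t where t: "t \<in> {0..1}" "w = g t" "g t \<noteq> g 1"
      unfolding path_image_def pathfinish_def by auto
    then have "t \<noteq> 1" by auto
    with t show "w \<in> g ` {0..<1}" by auto
  next
    fix w assume "w \<in> g ` {0..<1}"
    then obtain t where t: "t \<in> {0..<1}" "w = g t" by auto
    have inj: "inj_on g {0..1}" using assms arc_def by blast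
    have "g t \<noteq> g 1" using t inj_onD[OF inj, of t 1] by auto
    then show "w \<in> path_image g - {pathfinish g}"
      using t unfolding path_image_def pathfinish_def by auto
  qed
  moreover have "continuous_on {0..<1} g"
    using assms unfolding arc_def path_def by (rule continuous_on_subset[OF conjunct1]) auto
  ultimately show ?thesis
    by (metis connected_Ico connected_continuous_image)
qed

lemma K33_in:
  fixes A B :: "nat \<Rightarrow> complex" and g :: "nat \<Rightarrow> nat \<Rightarrow> real \<Rightarrow> complex"
  assumes arcs: "\<And>i j. i<3 \<Longrightarrow> j<3 \<Longrightarrow> arc (g i j)"
    and st: "\<And>i j. i<3 \<Longrightarrow> j<3 \<Longrightarrow> pathstart (g i j) = A i"
    and fi: "\<And>i j. i<3 \<Longrightarrow> j<3 \<Longrightarrow> pathfinish (g i j) = B j"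
    and disj: "\<And>i j k l. i<3 \<Longrightarrow> j<3 \<Longrightarrow> k<3 \<Longrightarrow> l<3 \<Longrightarrow> (i,j) \<noteq> (k,l) \<Longrightarrow>
       path_image (g i j) \<inter> path_image (g k l) \<subseteq> (if i=k then {A i} else {}) \<union> (if j=l then {B j} else {})"
    and dA: "\<And>i k. i<3 \<Longrightarrow> k<3 \<Longrightarrow> A i = A k \<Longrightarrow> i = k"
    and dAB: "\<And>i j. i<3 \<Longrightarrow> j<3 \<Longrightarrow> A i \<noteq> B j"
    and hin: "(path_image (g 0 2) \<union> path_image (g 1 2)) \<inter>
       inside (path_image (g 0 0) \<union> path_image (g 1 0) \<union> (path_image (g 0 1) \<union> path_image (g 1 1))) \<noteq> {}"
  shows False
proof -
  define P where "P j = g 0 j +++ reversepath (g 1 j)" for j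
  have Pimg: "path_image (P j) = path_image (g 0 j) \<union> path_image (g 1 j)" if "j<3" for j
    using that by (simp add: P_def path_image_join st fi path_image_reversepath)
  have Pst: "pathstart (P j) = A 0" if "j<3" for j using that by (simp add: P_def st)
  have Pfi: "pathfinish (P j) = A 1" if "j<3" for j using that by (simp add: P_def st)
  have Parc: "arc (P j)" if "j<3" for j
  proof -
    have "path_image (g 0 j) \<inter> path_image (g 1 j) \<subseteq> {B j}"
      using disj[of 0 j 1 j] that by simp
    then show ?thesis unfolding P_def
      using that by (intro arc_join arc_reversepath arcs) (auto simp: st fi path_image_reversepath)
  qed
  have empt: "path_image (g i j) \<inter> path_image (g k l) = {}"
    if "i<3" "j<3" "k<3" "l<3" "i\<noteq>k" "j\<noteq>l" for i j k l
    using disj[of i j k l] that by auto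
  have Pint: "path_image (P j) \<inter> path_image (P k) = {A 0, A 1}" if "j<3" "k<3" "j\<noteq>k" for j k
  proof
    have "path_image (g 0 j) \<inter> path_image (g 0 k) \<subseteq> {A 0}" using disj[of 0 j 0 k] that by simp
    moreover have "path_image (g 1 j) \<inter> path_image (g 1 k) \<subseteq> {A 1}" using disj[of 1 j 1 k] that by simp
    moreover have "path_image (g 0 j) \<inter> path_image (g 1 k) = {}" using empt[of 0 j 1 k] that by simp
    moreover have "path_image (g 1 j) \<inter> path_image (g 0 k) = {}" using empt[of 1 j 0 k] that by simp
    ultimately show "path_image (P j) \<inter> path_image (P k) \<subseteq> {A 0, A 1}"
      using that unfolding Pimg[OF that(1)] Pimg[OF that(2)] by blast
    show "{A 0, A 1} \<subseteq> path_image (P j) \<inter> path_image (P k)"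
    proof -
      have "A 0 \<in> path_image (g 0 j)" "A 0 \<in> path_image (g 0 k)"
        "A 1 \<in> path_image (g 1 j)" "A 1 \<in> path_image (g 1 k)"
        using st[of 0 j] st[of 0 k] st[of 1 j] st[of 1 k] that
          pathstart_in_path_image[of "g 0 j"] pathstart_in_path_image[of "g 0 k"]
          pathstart_in_path_image[of "g 1 j"] pathstart_in_path_image[of "g 1 k"] by auto
      then show ?thesis using that by (simp add: Pimg)
    qed
  qed
  have A01: "A 0 \<noteq> A 1" using dA[of 0 1] by auto
  obtain S1: "inside(path_image (P 0) \<union> path_image (P 2)) \<inter> inside(path_image (P 1) \<union> path_image (P 2)) = {}"
    and S2: "inside(path_image (P 0) \<union> path_image (P 2)) \<union> inside(path_image (P 1) \<union> path_image (P 2)) \<union>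
           (path_image (P 2) - {A 0, A 1}) = inside(path_image (P 0) \<union> path_image (P 1))"
  proof (rule split_inside_simple_closed_curve[of "P 0" "A 0" "A 1" "P 1" "P 2"])
    show "path_image (P 2) \<inter> inside (path_image (P 0) \<union> path_image (P 1)) \<noteq> {}"
      using hin by (simp add: Pimg)
    show "simple_path (P 0)" "simple_path (P 1)" "simple_path (P 2)"
      using Parc[of 0] Parc[of 1] Parc[of 2] arc_imp_simple_path by auto
    show "pathstart (P 0) = A 0" "pathstart (P 1) = A 0" "pathstart (P 2) = A 0"
      using Pst[of 0] Pst[of 1] Pst[of 2] by auto
    show "pathfinish (P 0) = A 1" "pathfinish (P 1) = A 1" "pathfinish (P 2) = A 1"
      using Pfi[of 0] Pfi[of 1] Pfi[of 2] by auto
    show "path_image (P 0) \<inter> path_image (P 1) = {A 0, A 1}"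
      "path_image (P 0) \<inter> path_image (P 2) = {A 0, A 1}"
      "path_image (P 1) \<inter> path_image (P 2) = {A 0, A 1}"
      using Pint[of 0 1] Pint[of 0 2] Pint[of 1 2] by auto
    show "A 0 \<noteq> A 1" by (rule A01)
  qed
  have P0: "path_image (P 0) = path_image (g 0 0) \<union> path_image (g 1 0)" using Pimg[of 0] by simp
  have P1: "path_image (P 1) = path_image (g 0 1) \<union> path_image (g 1 1)" using Pimg[of 1] by simp
  have P2: "path_image (P 2) = path_image (g 0 2) \<union> path_image (g 1 2)" using Pimg[of 2] by simp
  have A2G: "A 2 \<notin> path_image (g i j)" if "i<2" "j<3" for i j
  proof
    assume "A 2 \<in> path_image (g i j)"
    moreover have "A 2 \<in> path_image (g 2 j)" using st[of 2 j] that pathstart_in_path_image[of "g 2 j"] by simp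
    ultimately have "A 2 \<in> {B j}" using disj[of 2 j i j] that by auto
    then show False using dAB[of 2 j] that by auto
  qed
  have B1in: "B j \<in> path_image (g i j)" if "i<3" "j<3" for i j
    using fi[OF that] pathfinish_in_path_image[of "g i j"] by simp
  have A2in: "A 2 \<in> path_image (g 2 j)" if "j<3" for j
    using st[of 2 j] that pathstart_in_path_image[of "g 2 j"] by simp
  have S2a: "inside(path_image (P 0) \<union> path_image (P 2)) \<subseteq> inside(path_image (P 0) \<union> path_image (P 1))"
    unfolding S2[symmetric] by blast
  have S2b: "inside(path_image (P 1) \<union> path_image (P 2)) \<subseteq> inside(path_image (P 0) \<union> path_image (P 1))"
    unfolding S2[symmetric] by blast
  have S2c: "path_image (P 2) - {A 0, A 1} \<subseteq> inside(path_image (P 0) \<union> path_image (P 1))"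
    unfolding S2[symmetric] by blast
  have S2d: "inside(path_image (P 0) \<union> path_image (P 1)) \<subseteq> inside(path_image (P 0) \<union> path_image (P 2)) \<union> inside(path_image (P 1) \<union> path_image (P 2)) \<union>
           (path_image (P 2) - {A 0, A 1})"
    unfolding S2[symmetric] by (rule order_refl)
  show False
  proof (cases "A 2 \<in> inside(path_image (P 0) \<union> path_image (P 1))")
    case True
    have "A 2 \<notin> path_image (P 2)" using A2G[of 0 2] A2G[of 1 2] unfolding P2 by simp
    then have "A 2 \<in> inside(path_image (P 0) \<union> path_image (P 2)) \<or> A 2 \<in> inside(path_image (P 1) \<union> path_image (P 2))"
      using True S2d by blast
    then show False
    proof
      assume a: "A 2 \<in> inside(path_image (P 0) \<union> path_image (P 2))"
      have "path_image (g 2 1) \<inter> (path_image (P 0) \<union> path_image (P 2)) = {}"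
        using empt[of 2 1 0 0] empt[of 2 1 1 0] empt[of 2 1 0 2] empt[of 2 1 1 2] unfolding P0 P2 by auto
      then have "path_image (g 2 1) \<subseteq> inside(path_image (P 0) \<union> path_image (P 2))"
        using conn_inside[OF connected_arc_image[OF arcs[of 2 1]] _ A2in[of 1] a] by simp
      then have "B 1 \<in> inside(path_image (P 0) \<union> path_image (P 1))" using B1in[of 2 1] S2a by auto
      moreover have "B 1 \<in> path_image (P 1)" using B1in[of 0 1] unfolding P1 by simp
      ultimately show False using inside_no_overlap by blast
    next
      assume a: "A 2 \<in> inside(path_image (P 1) \<union> path_image (P 2))"
      have "path_image (g 2 0) \<inter> (path_image (P 1) \<union> path_image (P 2)) = {}"
        using empt[of 2 0 0 1] empt[of 2 0 1 1] empt[of 2 0 0 2] empt[of 2 0 1 2] unfolding P1 P2 by auto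
      then have "path_image (g 2 0) \<subseteq> inside(path_image (P 1) \<union> path_image (P 2))"
        using conn_inside[OF connected_arc_image[OF arcs[of 2 0]] _ A2in[of 0] a] by simp
      then have "B 0 \<in> inside(path_image (P 0) \<union> path_image (P 1))" using B1in[of 2 0] S2b by auto
      moreover have "B 0 \<in> path_image (P 0)" using B1in[of 0 0] unfolding P0 by simp
      ultimately show False using inside_no_overlap by blast
    qed
  next
    case False
    have "A 2 \<notin> path_image (P 0) \<union> path_image (P 1)"
      using A2G[of 0 0] A2G[of 1 0] A2G[of 0 1] A2G[of 1 1] unfolding P0 P1 by simp
    then have a: "A 2 \<in> outside(path_image (P 0) \<union> path_image (P 1))"
      using False by (simp add: outside_inside)
    have "path_image (g 2 2) \<inter> (path_image (P 0) \<union> path_image (P 1)) = {}"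
      using empt[of 2 2 0 0] empt[of 2 2 1 0] empt[of 2 2 0 1] empt[of 2 2 1 1] unfolding P0 P1 by auto
    then have "path_image (g 2 2) \<subseteq> outside(path_image (P 0) \<union> path_image (P 1))"
      using conn_outside[OF connected_arc_image[OF arcs[of 2 2]] _ A2in[of 2] a] by simp
    moreover have "B 2 \<in> inside(path_image (P 0) \<union> path_image (P 1))"
    proof -
      have "B 2 \<in> path_image (P 2)" using B1in[of 0 2] unfolding P2 by simp
      moreover have "B 2 \<noteq> A 0" "B 2 \<noteq> A 1" using dAB[of 0 2] dAB[of 1 2] by auto
      ultimately show ?thesis using S2c by blast
    qed
    ultimately show False using B1in[of 2 2] by (auto simp: outside_inside)
  qed
qed

lemma inversion_inside:
  fixes K :: "complex set" and p z :: complex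
  assumes K: "compact K" and p: "p \<in> inside K" and z: "z \<in> outside K"
  shows "inverse (z - p) \<in> inside ((\<lambda>w. inverse (w - p)) ` K)"
proof -
  define h where "h = (\<lambda>w::complex. inverse (w - p))"
  define K' where "K' = h ` K"
  have pK: "p \<notin> K" using p inside_no_overlap by blast
  have zK: "z \<notin> K" using z outside_no_overlap by blast
  have zp: "z \<noteq> p" using p z inside_Int_outside by blast
  have injh: "inj h" unfolding h_def by (rule injI) simp
  have conth: "continuous_on K h" unfolding h_def
    by (intro continuous_intros) (use pK in auto)
  have cK': "compact K'" unfolding K'_def by (rule compact_continuous_image[OF conth K])
  have hzK': "h z \<notin> K'" unfolding K'_def using injh zK by (auto dest: injD)
  define U where "U = connected_component_set (- K') (h z)"
  have "bounded U"
  proof (rule ccontr)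
    assume unb: "\<not> bounded U"
    have oU: "open U" unfolding U_def
      by (rule open_connected_component) (simp add: cK' compact_imp_closed open_Compl)
    have cU: "connected U" unfolding U_def by (rule connected_connected_component)
    have UK': "U \<subseteq> - K'" unfolding U_def by (rule connected_component_subset)
    define gm where "gm = (\<lambda>w::complex. p + inverse w)"
    have cU': "connected (U - {0})"
      by (rule connected_open_delete[OF oU cU]) simp
    have contg: "continuous_on (U - {0}) gm" unfolding gm_def
      by (intro continuous_intros) auto
    define W where "W = gm ` (U - {0})"
    have cW: "connected W" unfolding W_def by (rule connected_continuous_image[OF contg cU'])
    have hg: "h (gm w) = w" for w unfolding h_def gm_def by simp
    have WK: "W \<inter> K = {}"
    proof (rule ccontr)
      assume "W \<inter> K \<noteq> {}"
      then obtain w where w: "w \<in> U - {0}" "gm w \<in> K" unfolding W_def by auto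
      then have "h (gm w) \<in> K'" unfolding K'_def by auto
      then show False using hg[of w] w UK' by auto
    qed
    have hzU: "h z \<in> U" unfolding U_def using hzK' by simp
    have hz0: "h z \<noteq> 0" unfolding h_def using zp by simp
    have "gm (h z) = z" unfolding gm_def h_def by simp
    then have zW: "z \<in> W" unfolding W_def using hzU hz0 by (metis DiffI image_eqI singletonD)
    have Wout: "W \<subseteq> outside K" by (rule conn_outside[OF cW WK zW z])
    obtain e where e: "e > 0" "ball p e \<subseteq> inside K"
      using open_inside[OF compact_imp_closed[OF K]] p open_contains_ball by blast
    from unb obtain w where w: "w \<in> U" "norm w > 2 / e"
      unfolding bounded_iff by (meson not_le)
    have "2 / e > 0" using e by simp
    then have w0: "w \<noteq> 0" using w by auto
    have "dist p (gm w) = norm (inverse w)" unfolding gm_def dist_norm by simp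
    also have "\<dots> = 1 / norm w" by (simp add: norm_inverse divide_inverse)
    also have "\<dots> < e"
    proof -
      have "norm w > 0" using w0 by simp
      have "e * norm w > 2" using w e by (simp add: field_simps)
      then show ?thesis using \<open>norm w > 0\<close> e by (simp add: field_simps)
    qed
    finally have "gm w \<in> inside K" using e by auto
    moreover have "gm w \<in> outside K" using Wout w w0 unfolding W_def by auto
    ultimately show False using inside_Int_outside by blast
  qed
  then show ?thesis
    using hzK' unfolding inside_def U_def K'_def h_def by simp
qed

lemma K33_any:
  fixes A B :: "nat \<Rightarrow> complex" and g :: "nat \<Rightarrow> nat \<Rightarrow> real \<Rightarrow> complex"
  assumes arcs: "\<And>i j. i<3 \<Longrightarrow> j<3 \<Longrightarrow> arc (g i j)"
    and st: "\<And>i j. i<3 \<Longrightarrow> j<3 \<Longrightarrow> pathstart (g i j) = A i"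
    and fi: "\<And>i j. i<3 \<Longrightarrow> j<3 \<Longrightarrow> pathfinish (g i j) = B j"
    and disj: "\<And>i j k l. i<3 \<Longrightarrow> j<3 \<Longrightarrow> k<3 \<Longrightarrow> l<3 \<Longrightarrow> (i,j) \<noteq> (k,l) \<Longrightarrow>
       path_image (g i j) \<inter> path_image (g k l) \<subseteq> (if i=k then {A i} else {}) \<union> (if j=l then {B j} else {})"
    and dA: "\<And>i k. i<3 \<Longrightarrow> k<3 \<Longrightarrow> A i = A k \<Longrightarrow> i = k"
    and dAB: "\<And>i j. i<3 \<Longrightarrow> j<3 \<Longrightarrow> A i \<noteq> B j"
  shows False
proof (cases "(path_image (g 0 2) \<union> path_image (g 1 2)) \<inter>
       inside (path_image (g 0 0) \<union> path_image (g 1 0) \<union> (path_image (g 0 1) \<union> path_image (g 1 1))) \<noteq> {}")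
  case True
  show False by (rule K33_in[OF arcs st fi disj dA dAB True])
next
  case False
  define K where "K = path_image (g 0 0) \<union> path_image (g 1 0) \<union> (path_image (g 0 1) \<union> path_image (g 1 1))"
  have F: "(path_image (g 0 2) \<union> path_image (g 1 2)) \<inter> inside K = {}" using False K_def by simp
  have empt: "path_image (g i j) \<inter> path_image (g k l) = {}"
    if "i<3" "j<3" "k<3" "l<3" "i\<noteq>k" "j\<noteq>l" for i j k l
    using disj[of i j k l] that by auto
  have Bin: "B j \<in> path_image (g i j)" if "i<3" "j<3" for i j
    using fi[OF that] pathfinish_in_path_image[of "g i j"] by simp
  have Ain: "A i \<in> path_image (g i j)" if "i<3" "j<3" for i j
    using st[OF that] pathstart_in_path_image[of "g i j"] by simp
  have cK: "compact K" unfolding K_def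
    using arcs[of 0 0] arcs[of 1 0] arcs[of 0 1] arcs[of 1 1]
    by (intro compact_Un compact_path_image arc_imp_path) auto
  define P where "P j = g 0 j +++ reversepath (g 1 j)" for j
  have Pimg: "path_image (P j) = path_image (g 0 j) \<union> path_image (g 1 j)" if "j<3" for j
    using that by (simp add: P_def path_image_join st fi path_image_reversepath)
  have Pst: "pathstart (P j) = A 0" if "j<3" for j using that by (simp add: P_def st)
  have Pfi: "pathfinish (P j) = A 1" if "j<3" for j using that by (simp add: P_def st)
  have Parc: "arc (P j)" if "j<3" for j
  proof -
    have "path_image (g 0 j) \<inter> path_image (g 1 j) \<subseteq> {B j}"
      using disj[of 0 j 1 j] that by simp
    then show ?thesis unfolding P_def
      using that by (intro arc_join arc_reversepath arcs) (auto simp: st fi path_image_reversepath)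
  qed
  have Pint: "path_image (P j) \<inter> path_image (P k) = {A 0, A 1}" if "j<3" "k<3" "j\<noteq>k" for j k
  proof
    have "path_image (g 0 j) \<inter> path_image (g 0 k) \<subseteq> {A 0}" using disj[of 0 j 0 k] that by simp
    moreover have "path_image (g 1 j) \<inter> path_image (g 1 k) \<subseteq> {A 1}" using disj[of 1 j 1 k] that by simp
    moreover have "path_image (g 0 j) \<inter> path_image (g 1 k) = {}" using empt[of 0 j 1 k] that by simp
    moreover have "path_image (g 1 j) \<inter> path_image (g 0 k) = {}" using empt[of 1 j 0 k] that by simp
    ultimately show "path_image (P j) \<inter> path_image (P k) \<subseteq> {A 0, A 1}"
      using that unfolding Pimg[OF that(1)] Pimg[OF that(2)] by blast
    show "{A 0, A 1} \<subseteq> path_image (P j) \<inter> path_image (P k)"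
    proof -
      have "A 0 \<in> path_image (g 0 j)" "A 0 \<in> path_image (g 0 k)"
        "A 1 \<in> path_image (g 1 j)" "A 1 \<in> path_image (g 1 k)"
        using st[of 0 j] st[of 0 k] st[of 1 j] st[of 1 k] that
          pathstart_in_path_image[of "g 0 j"] pathstart_in_path_image[of "g 0 k"]
          pathstart_in_path_image[of "g 1 j"] pathstart_in_path_image[of "g 1 k"] by auto
      then show ?thesis using that by (simp add: Pimg)
    qed
  qed
  have P01: "path_image (P 0) \<inter> path_image (P 1) \<subseteq> {A 0, A 1}" using Pint[of 0 1] by simp
  have P0: "path_image (P 0) = path_image (g 0 0) \<union> path_image (g 1 0)" using Pimg[of 0] by simp
  have P1: "path_image (P 1) = path_image (g 0 1) \<union> path_image (g 1 1)" using Pimg[of 1] by simp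
  have sp: "simple_path (P 0 +++ reversepath (P 1))"
  proof -
    have e1: "pathfinish (reversepath (P 1)) = pathstart (P 0)" using Pst[of 0] Pst[of 1] by simp
    have e2: "pathfinish (P 0) = pathstart (reversepath (P 1))" using Pfi[of 0] Pfi[of 1] by simp
    have "arc (P 0)" "arc (reversepath (P 1))" using Parc[of 0] Parc[of 1] arc_reversepath by auto
    moreover have "path_image (P 0) \<inter> path_image (reversepath (P 1)) \<subseteq> {pathstart (P 0), pathstart (reversepath (P 1))}"
      using P01 Pst[of 0] Pfi[of 1] by (simp add: path_image_reversepath)
    ultimately show ?thesis using simple_path_join_loop_eq[OF e1 e2] by blast
  qed
  have spimg: "path_image (P 0 +++ reversepath (P 1)) = K"
  proof -
    have "pathfinish (P 0) = pathstart (reversepath (P 1))" using Pfi[of 0] Pfi[of 1] by simp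
    then have "path_image (P 0 +++ reversepath (P 1)) = path_image (P 0) \<union> path_image (P 1)"
      by (simp add: path_image_join path_image_reversepath)
    also have "\<dots> = K" unfolding K_def P0 P1 by (rule refl)
    finally show ?thesis .
  qed
  have "inside K \<noteq> {}"
  proof -
    have "pathfinish (P 0 +++ reversepath (P 1)) = pathstart (P 0 +++ reversepath (P 1))"
      using Pst[of 0] Pst[of 1] by simp
    from Jordan_inside_outside[OF sp this] show ?thesis unfolding spimg by blast
  qed
  then obtain p where p: "p \<in> inside K" by blast
  have A2G: "A 2 \<notin> path_image (g i j)" if "i<2" "j<3" for i j
  proof
    assume "A 2 \<in> path_image (g i j)"
    then have "A 2 \<in> {B j}" using disj[of 2 j i j] Ain[of 2 j] that by auto
    then show False using dAB[of 2 j] that by auto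
  qed
  have A2K: "A 2 \<notin> K"
    using A2G[of 0 0] A2G[of 1 0] A2G[of 0 1] A2G[of 1 1] unfolding K_def by simp
  have G2K: "path_image (g 2 j) - {B j} \<subseteq> - K" if "j<3" for j
  proof -
    have X: "path_image (g 2 j) \<inter> path_image (g i l) \<subseteq> {B j}" if "i<2" "l<2" for i l
      using disj[of 2 j i l] that \<open>j<3\<close> by (cases "j = l") auto
    show ?thesis unfolding K_def using X[of 0 0] X[of 1 0] X[of 0 1] X[of 1 1] by auto
  qed
  have B2G: "B 2 \<notin> path_image (g i l)" if "i<2" "l<2" for i l
  proof
    assume "B 2 \<in> path_image (g i l)"
    then have "B 2 \<in> path_image (g 0 2) \<inter> path_image (g i l)" using Bin[of 0 2] by simp
    also have "\<dots> \<subseteq> (if 0=i then {A 0} else {})" using disj[of 0 2 i l] that by simp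
    finally show False using dAB[of 0 2] by (auto split: if_splits)
  qed
  have B2K: "B 2 \<notin> K"
    using B2G[of 0 0] B2G[of 1 0] B2G[of 0 1] B2G[of 1 1] unfolding K_def by simp
  have A2out: "A 2 \<in> outside K"
  proof (rule ccontr)
    assume "A 2 \<notin> outside K"
    then have a: "A 2 \<in> inside K" using A2K by (simp add: outside_inside)
    have "path_image (g 2 2) \<inter> K = {}" using G2K[of 2] B2K by auto
    then have "path_image (g 2 2) \<subseteq> inside K"
      using conn_inside[OF connected_arc_image[OF arcs[of 2 2]] _ Ain[of 2 2] a] by simp
    then show False using F Bin[of 0 2] Bin[of 2 2] by auto
  qed
  have noin: "path_image (g i j) \<inter> inside K = {}" if "i<3" "j<3" for i j
  proof -
    have lowj: "path_image (g i' j) \<inter> inside K = {}" if "i'<2" for i'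
    proof (cases "j = 2")
      case True
      have "i' = 0 \<or> i' = 1" using that by arith
      then show ?thesis using F True by (elim disjE) auto
    next
      case False
      have "i' = 0 \<or> i' = 1" using that by arith
      moreover have "j = 0 \<or> j = 1" using False \<open>j<3\<close> by arith
      ultimately have "path_image (g i' j) \<subseteq> K" unfolding K_def by (elim disjE) auto
      then show ?thesis by (auto simp: inside_def)
    qed
    show ?thesis
    proof (cases "i < 2")
      case True then show ?thesis using lowj by simp
    next
      case False
      then have i2: "i = 2" using that by simp
      have A2B: "A 2 \<in> path_image (g 2 j) - {B j}" using Ain[of 2 j] dAB[of 2 j] that by simp
      have "path_image (g 2 j) - {B j} \<subseteq> outside K"
        using conn_outside[OF _ _ A2B A2out] connected_arc_minus_finish[OF arcs[of 2 j]] fi[of 2 j] G2K[of j] that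
        by auto
      moreover have "B j \<notin> inside K" using lowj[of 0] Bin[of 0 j] that by auto
      ultimately show ?thesis using i2 inside_Int_outside by blast
    qed
  qed
  define h where "h = (\<lambda>w::complex. inverse (w - p))"
  have injh: "inj h" unfolding h_def by (rule injI) simp
  have pG: "p \<notin> path_image (g i j)" if "i<3" "j<3" for i j using noin[OF that] p by auto
  have conth: "continuous_on (path_image (g i j)) h" if "i<3" "j<3" for i j unfolding h_def
    by (intro continuous_intros) (use pG[OF that] in auto)
  have B2out: "B 2 \<in> outside K"
  proof -
    note B2K
    moreover have "B 2 \<notin> inside K" using F Bin[of 0 2] by auto
    ultimately show ?thesis by (simp add: outside_inside)
  qed
  show False
  proof (rule K33_in[of "\<lambda>i j. h \<circ> g i j" "h \<circ> A" "h \<circ> B"])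
    fix i j :: nat assume ij: "i<3" "j<3"
    show "arc (h \<circ> g i j)" unfolding arc_def
    proof
      show "path (h \<circ> g i j)" using arcs[OF ij] conth[OF ij] arc_imp_path path_continuous_image by blast
      show "inj_on (h \<circ> g i j) {0..1}" using arcs[OF ij] injh unfolding arc_def
        by (metis comp_inj_on inj_on_subset subset_UNIV)
    qed
    show "pathstart (h \<circ> g i j) = (h \<circ> A) i" using st[OF ij] by (simp add: pathstart_compose)
    show "pathfinish (h \<circ> g i j) = (h \<circ> B) j" using fi[OF ij] by (simp add: pathfinish_compose)
  next
    fix i j k l :: nat assume a: "i<3" "j<3" "k<3" "l<3" "(i,j) \<noteq> (k,l)"
    have "path_image (h \<circ> g i j) \<inter> path_image (h \<circ> g k l) = h ` (path_image (g i j) \<inter> path_image (g k l))"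
      by (simp add: path_image_compose image_Int[OF injh])
    also have "\<dots> \<subseteq> h ` ((if i=k then {A i} else {}) \<union> (if j=l then {B j} else {}))"
      using disj[OF a] by (rule image_mono)
    finally show "path_image (h \<circ> g i j) \<inter> path_image (h \<circ> g k l) \<subseteq>
       (if i=k then {(h \<circ> A) i} else {}) \<union> (if j=l then {(h \<circ> B) j} else {})" by auto
  next
    fix i k :: nat assume "i<3" "k<3" "(h \<circ> A) i = (h \<circ> A) k"
    then show "i = k" using dA injh by (auto dest: injD)
  next
    fix i j :: nat assume "i<3" "j<3"
    then show "(h \<circ> A) i \<noteq> (h \<circ> B) j" using dAB injh by (auto dest: injD)
  next
    have "h (B 2) \<in> inside (h ` K)" unfolding h_def by (rule inversion_inside[OF cK p B2out])
    moreover have "h (B 2) \<in> path_image (h \<circ> g 0 2)" using Bin[of 0 2] by (simp add: path_image_compose)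
    moreover have "h ` K = path_image (h \<circ> g 0 0) \<union> path_image (h \<circ> g 1 0) \<union> (path_image (h \<circ> g 0 1) \<union> path_image (h \<circ> g 1 1))"
      unfolding K_def by (simp add: path_image_compose image_Un)
    ultimately show "(path_image (h \<circ> g 0 2) \<union> path_image (h \<circ> g 1 2)) \<inter>
       inside (path_image (h \<circ> g 0 0) \<union> path_image (h \<circ> g 1 0) \<union> (path_image (h \<circ> g 0 1) \<union> path_image (h \<circ> g 1 1))) \<noteq> {}"
      by auto
  qed
qed

lemma K33_not_planar:
  fixes V :: "'v set" and E :: "'v \<Rightarrow> 'v \<Rightarrow> bool" and a b :: "nat \<Rightarrow> 'v"
  assumes aV: "\<And>i. i<3 \<Longrightarrow> a i \<in> V" and bV: "\<And>j. j<3 \<Longrightarrow> b j \<in> V"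
    and da: "\<And>i k. i<3 \<Longrightarrow> k<3 \<Longrightarrow> a i = a k \<Longrightarrow> i = k"
    and db: "\<And>i k. i<3 \<Longrightarrow> k<3 \<Longrightarrow> b i = b k \<Longrightarrow> i = k"
    and dab: "\<And>i j. i<3 \<Longrightarrow> j<3 \<Longrightarrow> a i \<noteq> b j"
    and E: "\<And>i j. i<3 \<Longrightarrow> j<3 \<Longrightarrow> E (a i) (b j)"
  shows "\<not> planar V E"
proof
  assume "planar V E"
  then obtain f :: "'v \<Rightarrow> complex" and \<gamma> :: "'v \<Rightarrow> 'v \<Rightarrow> real \<Rightarrow> complex" where
    H: "inj_on f V \<and> (\<forall>u v. E u v \<longrightarrow> arc (\<gamma> u v) \<and> pathstart (\<gamma> u v) = f u \<and> pathfinish (\<gamma> u v) = f v) \<and> (\<forall>u v w. E u v \<and> w \<in> V \<and> f w \<in> path_image (\<gamma> u v) \<longrightarrow> w = u \<or> w = v) \<and> (\<forall>u v a b. E u v \<and> E a b \<and> {u, v} \<noteq> {a, b} \<longrightarrow>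
        path_image (\<gamma> u v) \<inter> path_image (\<gamma> a b) \<subseteq> f ` ({u, v} \<inter> {a, b}))"
    unfolding planar_def by (elim exE) (erule that)
  have inj: "inj_on f V" using H by (elim conjE) assumption
  have c2: "\<forall>u v. E u v \<longrightarrow> arc (\<gamma> u v) \<and> pathstart (\<gamma> u v) = f u \<and> pathfinish (\<gamma> u v) = f v" using H by (elim conjE) assumption
  have c4: "\<forall>u v a b. E u v \<and> E a b \<and> {u, v} \<noteq> {a, b} \<longrightarrow>
        path_image (\<gamma> u v) \<inter> path_image (\<gamma> a b) \<subseteq> f ` ({u, v} \<inter> {a, b})" using H by (elim conjE) assumption
  show False
  proof (rule K33_any[of "\<lambda>i j. \<gamma> (a i) (b j)" "f \<circ> a" "f \<circ> b"])
    fix i j :: nat assume ij: "i<3" "j<3"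
    show "arc (\<gamma> (a i) (b j))" using c2 E[OF ij] by blast
    show "pathstart (\<gamma> (a i) (b j)) = (f \<circ> a) i" using c2 E[OF ij] by simp
    show "pathfinish (\<gamma> (a i) (b j)) = (f \<circ> b) j" using c2 E[OF ij] by simp
  next
    fix i j k l :: nat assume a: "i<3" "j<3" "k<3" "l<3" "(i,j) \<noteq> (k,l)"
    have ne: "{a i, b j} \<noteq> {a k, b l}"
    proof
      assume eq: "{a i, b j} = {a k, b l}"
      then have "a i \<in> {a k, b l}" by blast
      then have "a i = a k" using dab[of i l] a by blast
      then have "i = k" using da[of i k] a by blast
      moreover have "b j \<in> {a k, b l}" using eq by blast
      then have "b j = b l" using dab[of k j] a by auto
      then have "j = l" using db[of j l] a by blast
      ultimately show False using a by simp
    qed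
    have "path_image (\<gamma> (a i) (b j)) \<inter> path_image (\<gamma> (a k) (b l)) \<subseteq> f ` ({a i, b j} \<inter> {a k, b l})"
      using c4 E[OF a(1,2)] E[OF a(3,4)] ne by blast
    also have "\<dots> \<subseteq> (if i=k then {(f \<circ> a) i} else {}) \<union> (if j=l then {(f \<circ> b) j} else {})"
    proof
      fix y assume "y \<in> f ` ({a i, b j} \<inter> {a k, b l})"
      then obtain x where x: "x \<in> {a i, b j}" "x \<in> {a k, b l}" "y = f x" by blast
      show "y \<in> (if i=k then {(f \<circ> a) i} else {}) \<union> (if j=l then {(f \<circ> b) j} else {})"
      proof (cases "x = a i")
        case True
        then have "a i = a k" using x dab[of i l] a by auto
        then have "i = k" using da[of i k] a by blast
        then show ?thesis using x True by simp
      next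
        case False
        then have "x = b j" using x by auto
        then have "b j = b l" using x dab[of k j] a by auto
        then have "j = l" using db[of j l] a by blast
        then show ?thesis using x \<open>x = b j\<close> by simp
      qed
    qed
    finally show "path_image (\<gamma> (a i) (b j)) \<inter> path_image (\<gamma> (a k) (b l))
      \<subseteq> (if i=k then {(f \<circ> a) i} else {}) \<union> (if j=l then {(f \<circ> b) j} else {})" .
  next
    fix i k :: nat assume "i<3" "k<3" "(f \<circ> a) i = (f \<circ> a) k"
    then show "i = k" using inj aV[of i] aV[of k] da[of i k] by (auto dest: inj_onD)
  next
    fix i j :: nat assume "i<3" "j<3"
    then show "(f \<circ> a) i \<noteq> (f \<circ> b) j" using inj aV[of i] bV[of j] dab[of i j] by (auto dest: inj_onD)
  qed
qed


lemma (in cring) krull: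
  assumes "ideal I R" "\<one> \<notin> I"
  shows "\<exists>M. maximalideal M R \<and> I \<subseteq> M"
proof -
  define A where "A = {J. ideal J R \<and> I \<subseteq> J \<and> \<one> \<notin> J}"
  have "A \<noteq> {}" using assms unfolding A_def by blast
  moreover have "\<Union>C \<in> A" if "C \<noteq> {}" "subset.chain A C" for C
  proof -
    have ch: "subset.chain {J. ideal J R} C"
      using that(2) unfolding pred_on.chain_def A_def by blast
    have "ideal (\<Union>C) R" using chain_Union_is_ideal[OF ch] that(1) by simp
    moreover have "I \<subseteq> \<Union>C" using that unfolding pred_on.chain_def A_def by blast
    moreover have "\<one> \<notin> \<Union>C" using that unfolding pred_on.chain_def A_def by blast
    ultimately show ?thesis unfolding A_def by blast
  qed
  ultimately obtain M where M: "M \<in> A" and Mmax: "\<And>Z. Z \<in> A \<Longrightarrow> M \<subseteq> Z \<Longrightarrow> Z = M"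
    using subset_Zorn_nonempty[of A] by blast
  have "maximalideal M R"
  proof (rule maximalidealI)
    show "ideal M R" using M A_def by blast
    show "carrier R \<noteq> M" using M A_def by blast
    fix J assume J: "ideal J R" "M \<subseteq> J" "J \<subseteq> carrier R"
    show "J = M \<or> J = carrier R"
    proof (cases "\<one> \<in> J")
      case True then show ?thesis using ideal.one_imp_carrier[OF J(1)] by blast
    next
      case False
      then have "J \<in> A" using J M unfolding A_def by blast
      then show ?thesis using Mmax J by blast
    qed
  qed
  then show ?thesis using M A_def by blast
qed

lemma (in cring) local_one_plus:
  assumes loc: "local_cring R" and K: "ideal K R" "\<one> \<notin> K" "x \<in> K"
    and L: "ideal L R" "\<one> \<notin> L"
  shows "\<one> \<oplus> x \<notin> L"
proof
  assume a: "\<one> \<oplus> x \<in> L"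
  obtain M1 where M1: "maximalideal M1 R" "K \<subseteq> M1" using krull[OF K(1,2)] by blast
  obtain M2 where M2: "maximalideal M2 R" "L \<subseteq> M2" using krull[OF L] by blast
  have ex: "\<exists>!M. maximalideal M R" using loc unfolding local_cring_def by (rule conjunct2)
  then obtain M where "\<forall>N. maximalideal N R \<longrightarrow> N = M" by (elim ex1E) blast
  then have "M1 = M" "M2 = M" using M1(1) M2(1) by blast+
  then have "M1 = M2" by simp
  then have in1: "\<one> \<oplus> x \<in> M1" "x \<in> M1" using a M1(2) M2(2) K(3) by blast+
  interpret M: maximalideal M1 R by (rule M1(1))
  have xc: "x \<in> carrier R" by (rule ideal.Icarr[OF K(1) K(3)])
  have m: "(\<one> \<oplus> x) \<oplus> (\<ominus> x) \<in> M1" using in1 M.a_closed M.a_inv_closed by blast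
  have e: "(\<one> \<oplus> x) \<oplus> (\<ominus> x) = \<one>" using xc by (simp add: a_assoc r_neg)
  have "\<one> \<in> M1" using m unfolding e .
  then show False using M.I_notcarr M.one_imp_carrier by simp
qed

lemma (in cring) ep_ideal:
  assumes xc: "x \<in> carrier R" and J: "ideal J R"
  shows "ideal (elt_plus_ideal R x J) R"
proof -
  have "elt_plus_ideal R x J = set_add R (PIdl x) J"
  proof (intro equalityI subsetI)
    fix y assume "y \<in> elt_plus_ideal R x J"
    then obtain s j where y: "y = x \<otimes> s \<oplus> j" "s \<in> carrier R" "j \<in> J"
      unfolding elt_plus_ideal_def by blast
    have "x \<otimes> s = s \<otimes> x" using xc y(2) by (rule m_comm)
    then have "x \<otimes> s \<in> PIdl x" unfolding cgenideal_def using y(2) by blast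
    then show "y \<in> set_add R (PIdl x) J" unfolding set_add_def' using y by blast
  next
    fix y assume "y \<in> set_add R (PIdl x) J"
    then obtain h k where hk: "h \<in> PIdl x" "k \<in> J" "y = h \<oplus> k" unfolding set_add_def' by blast
    then obtain s where s: "s \<in> carrier R" "h = s \<otimes> x" unfolding cgenideal_def by blast
    have "h = x \<otimes> s" using s xc m_comm by simp
    then show "y \<in> elt_plus_ideal R x J" unfolding elt_plus_ideal_def using hk s by blast
  qed
  then show ?thesis using add_ideals[OF cgenideal_ideal[OF xc] J] by simp
qed

lemma (in cring) ep_self:
  assumes "x \<in> carrier R" "ideal J R"
  shows "x \<in> elt_plus_ideal R x J"
proof -
  have z: "\<zero> \<in> J" using assms(2) additive_subgroup.zero_closed ideal.axioms(1) by blast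
  have "x = x \<otimes> \<one> \<oplus> \<zero>" using assms(1) by simp
  then show ?thesis unfolding elt_plus_ideal_def using z by blast
qed

lemma (in cring) ep_sub:
  assumes "x \<in> carrier R" "ideal J R"
  shows "J \<subseteq> elt_plus_ideal R x J"
proof
  fix j assume j: "j \<in> J"
  then have "j \<in> carrier R" by (rule ideal.Icarr[OF assms(2)])
  then have "j = x \<otimes> \<zero> \<oplus> j" using assms(1) by simp
  then show "j \<in> elt_plus_ideal R x J" unfolding elt_plus_ideal_def using j by blast
qed

lemma (in cring) ep_zero:
  assumes "ideal J R"
  shows "elt_plus_ideal R \<zero> J = J"
proof
  show "J \<subseteq> elt_plus_ideal R \<zero> J" by (rule ep_sub[OF zero_closed assms])
  show "elt_plus_ideal R \<zero> J \<subseteq> J"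
  proof
    fix y assume "y \<in> elt_plus_ideal R \<zero> J"
    then obtain s j where "y = \<zero> \<otimes> s \<oplus> j" "s \<in> carrier R" "j \<in> J" unfolding elt_plus_ideal_def by blast
    moreover have "j \<in> carrier R" by (rule ideal.Icarr[OF assms \<open>j \<in> J\<close>])
    ultimately show "y \<in> J" by simp
  qed
qed

lemma (in cring) ep_one:
  assumes "x \<in> carrier R" "ideal J R" "elt_plus_ideal R x J \<noteq> carrier R"
  shows "\<one> \<notin> elt_plus_ideal R x J"
  using ideal.one_imp_carrier[OF ep_ideal[OF assms(1,2)]] assms(3) by blast

lemma (in cring) good_units:
  assumes loc: "local_cring R" and J: "ideal J R" "J \<noteq> carrier R"
    and x: "x \<in> gverts R J" and y: "y \<in> gverts R J"
    and u: "u \<in> {\<one>, \<one> \<oplus> x, \<one> \<oplus> y}"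
  shows "u \<in> carrier R" "u \<notin> elt_plus_ideal R x J" "u \<notin> elt_plus_ideal R y J" "u \<notin> J"
proof -
  have xc: "x \<in> carrier R" and yc: "y \<in> carrier R" using x y unfolding gverts_def by auto
  have ix: "ideal (elt_plus_ideal R x J) R" and iy: "ideal (elt_plus_ideal R y J) R"
    using ep_ideal xc yc J by auto
  have 1: "\<one> \<notin> elt_plus_ideal R x J" "\<one> \<notin> elt_plus_ideal R y J"
    using ep_one xc yc J x y unfolding gverts_def by auto
  have xx: "x \<in> elt_plus_ideal R x J" and yy: "y \<in> elt_plus_ideal R y J"
    using ep_self xc yc J by auto
  have gen: "\<one> \<oplus> a \<notin> elt_plus_ideal R a J" if "a \<in> carrier R" "\<one> \<notin> elt_plus_ideal R a J" for a
  proof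
    assume a: "\<one> \<oplus> a \<in> elt_plus_ideal R a J"
    have ia: "ideal (elt_plus_ideal R a J) R" using ep_ideal that(1) J(1) by blast
    have aa: "a \<in> elt_plus_ideal R a J" using ep_self that(1) J(1) by blast
    interpret I: ideal "elt_plus_ideal R a J" R by (rule ia)
    have m: "(\<one> \<oplus> a) \<oplus> (\<ominus> a) \<in> elt_plus_ideal R a J" using a aa I.a_closed I.a_inv_closed by blast
    have e: "(\<one> \<oplus> a) \<oplus> (\<ominus> a) = \<one>" using that(1) by (simp add: a_assoc r_neg)
    have "\<one> \<in> elt_plus_ideal R a J" using m unfolding e .
    then show False using that(2) by blast
  qed
  have ux: "u \<notin> elt_plus_ideal R x J" and uy: "u \<notin> elt_plus_ideal R y J"
  proof -
    have "\<one> \<oplus> x \<notin> elt_plus_ideal R x J" by (rule gen[OF xc 1(1)])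
    moreover have "\<one> \<oplus> y \<notin> elt_plus_ideal R y J" by (rule gen[OF yc 1(2)])
    moreover have "\<one> \<oplus> x \<notin> elt_plus_ideal R y J"
      by (rule local_one_plus[OF loc ix 1(1) xx iy 1(2)])
    moreover have "\<one> \<oplus> y \<notin> elt_plus_ideal R x J"
      by (rule local_one_plus[OF loc iy 1(2) yy ix 1(1)])
    ultimately show "u \<notin> elt_plus_ideal R x J" "u \<notin> elt_plus_ideal R y J" using u 1 by auto
  qed
  show "u \<notin> elt_plus_ideal R x J" "u \<notin> elt_plus_ideal R y J" by (fact ux, fact uy)
  show "u \<in> carrier R" using u xc yc by auto
  show "u \<notin> J" using ux ep_sub[OF xc J(1)] by blast
qed


lemma RDP_mult: "(a,b) \<otimes>\<^bsub>RDirProd R S\<^esub> (c,d) = (a \<otimes>\<^bsub>R\<^esub> c, b \<otimes>\<^bsub>S\<^esub> d)"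
  by (simp add: RDirProd_def DirProd_def monoid.defs)

lemma RDP_add: "(a,b) \<oplus>\<^bsub>RDirProd R S\<^esub> (c,d) = (a \<oplus>\<^bsub>R\<^esub> c, b \<oplus>\<^bsub>S\<^esub> d)"
  by (simp add: RDirProd_def DirProd_def monoid.defs)

lemma RDP_ep:
  "elt_plus_ideal (RDirProd R S) (c,d) (I \<times> J) = elt_plus_ideal R c I \<times> elt_plus_ideal S d J"
proof (intro equalityI subsetI)
  fix y assume "y \<in> elt_plus_ideal (RDirProd R S) (c,d) (I \<times> J)"
  then obtain s j where y: "y = (c,d) \<otimes>\<^bsub>RDirProd R S\<^esub> s \<oplus>\<^bsub>RDirProd R S\<^esub> j"
    "s \<in> carrier R \<times> carrier S" "j \<in> I \<times> J"
    unfolding elt_plus_ideal_def RDirProd_carrier by blast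
  obtain s1 s2 j1 j2 where sj: "s = (s1,s2)" "j = (j1,j2)" by (cases s, cases j) blast
  have "y = (c \<otimes>\<^bsub>R\<^esub> s1 \<oplus>\<^bsub>R\<^esub> j1, d \<otimes>\<^bsub>S\<^esub> s2 \<oplus>\<^bsub>S\<^esub> j2)"
    using y(1) sj by (simp add: RDP_mult RDP_add)
  then show "y \<in> elt_plus_ideal R c I \<times> elt_plus_ideal S d J"
    unfolding elt_plus_ideal_def using y(2,3) sj by blast
next
  fix y assume "y \<in> elt_plus_ideal R c I \<times> elt_plus_ideal S d J"
  then obtain s1 j1 s2 j2 where y: "y = (c \<otimes>\<^bsub>R\<^esub> s1 \<oplus>\<^bsub>R\<^esub> j1, d \<otimes>\<^bsub>S\<^esub> s2 \<oplus>\<^bsub>S\<^esub> j2)"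
    "s1 \<in> carrier R" "j1 \<in> I" "s2 \<in> carrier S" "j2 \<in> J"
    unfolding elt_plus_ideal_def by blast
  have "y = (c,d) \<otimes>\<^bsub>RDirProd R S\<^esub> (s1,s2) \<oplus>\<^bsub>RDirProd R S\<^esub> (j1,j2)"
    using y(1) by (simp add: RDP_mult RDP_add)
  moreover have "(s1,s2) \<in> carrier (RDirProd R S)" using y by (simp add: RDirProd_carrier)
  moreover have "(j1,j2) \<in> I \<times> J" using y by simp
  ultimately show "y \<in> elt_plus_ideal (RDirProd R S) (c,d) (I \<times> J)"
    unfolding elt_plus_ideal_def by blast
qed

lemma RDP_gverts:
  "(a,b) \<in> gverts (RDirProd R S) (I \<times> J) \<longleftrightarrow>
    a \<in> carrier R \<and> b \<in> carrier S \<and> \<not> (a \<in> I \<and> b \<in> J) \<and>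
    elt_plus_ideal R a I \<times> elt_plus_ideal S b J \<noteq> carrier R \<times> carrier S"
  by (simp add: gverts_def RDirProd_carrier RDP_ep)

lemma RDP_gadj:
  "gadj (RDirProd R S) (I \<times> J) (a,b) (c,d) \<longleftrightarrow>
    (a,b) \<in> gverts (RDirProd R S) (I \<times> J) \<and> (c,d) \<in> gverts (RDirProd R S) (I \<times> J) \<and> (a,b) \<noteq> (c,d) \<and>
    \<not> (a \<in> elt_plus_ideal R c I \<and> b \<in> elt_plus_ideal S d J) \<and>
    \<not> (c \<in> elt_plus_ideal R a I \<and> d \<in> elt_plus_ideal S b J)"
  unfolding gadj_def by (simp add: RDP_ep)

lemma less3_cases: "(i::nat) < 3 \<Longrightarrow> i = 0 \<or> i = 1 \<or> i = 2" by arith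

lemma prod_ne_carrier:
  assumes "p \<in> carrier R" "q \<in> carrier S" "\<not> (p \<in> U1 \<and> q \<in> U2)"
  shows "U1 \<times> U2 \<noteq> carrier R \<times> carrier S"
  using assms by blast

lemma case1:
  fixes R1 :: "('a,'m) ring_scheme" and R2 :: "('b,'n) ring_scheme"
  assumes loc1: "local_cring R1" and c2: "cring R2"
    and I1: "ideal I1 R1" "I1 \<noteq> carrier R1" and I2: "ideal I2 R2" "I2 \<noteq> carrier R2"
    and adj: "gadj R1 I1 x y"
  shows "\<not> planar (gverts (RDirProd R1 R2) (I1 \<times> I2)) (gadj (RDirProd R1 R2) (I1 \<times> I2))"
proof -
  interpret A: cring R1 using loc1 unfolding local_cring_def by blast
  interpret B: cring R2 by (rule c2)
  have xv: "x \<in> gverts R1 I1" and yv: "y \<in> gverts R1 I1" and xy: "x \<noteq> y"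
    using adj unfolding gadj_def by auto
  have xc: "x \<in> carrier R1" "x \<notin> I1" and yc: "y \<in> carrier R1" "y \<notin> I1"
    using xv yv unfolding gverts_def by auto
  have one2: "\<one>\<^bsub>R2\<^esub> \<notin> I2" using I2 ideal.one_imp_carrier by blast
  have zero2: "\<zero>\<^bsub>R2\<^esub> \<in> I2" using additive_subgroup.zero_closed[OF ideal.axioms(1)[OF I2(1)]] by simp
  have one1: "\<one>\<^bsub>R1\<^esub> \<notin> I1" using I1 ideal.one_imp_carrier by blast
  have zero1: "\<zero>\<^bsub>R1\<^esub> \<in> I1" using additive_subgroup.zero_closed[OF ideal.axioms(1)[OF I1(1)]] by simp
  have E0: "elt_plus_ideal R1 \<zero>\<^bsub>R1\<^esub> I1 = I1" by (rule A.ep_zero[OF I1(1)])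
  have E20: "elt_plus_ideal R2 \<zero>\<^bsub>R2\<^esub> I2 = I2" by (rule B.ep_zero[OF I2(1)])
  have avP: "v \<in> carrier R1 \<and> \<one>\<^bsub>R1\<^esub> \<notin> elt_plus_ideal R1 v I1 \<and> v \<notin> I1 \<or> v = \<zero>\<^bsub>R1\<^esub>"
    if "v \<in> {x, y, \<zero>\<^bsub>R1\<^esub>}" for v
  proof -
    have "\<one>\<^bsub>R1\<^esub> \<notin> elt_plus_ideal R1 x I1" using A.ep_one[OF xc(1) I1(1)] xv unfolding gverts_def by blast
    moreover have "\<one>\<^bsub>R1\<^esub> \<notin> elt_plus_ideal R1 y I1" using A.ep_one[OF yc(1) I1(1)] yv unfolding gverts_def by blast
    ultimately show ?thesis using that xc yc by blast
  qed
  have avQ: "v \<in> carrier R1 \<and> \<one>\<^bsub>R1\<^esub> \<notin> elt_plus_ideal R1 v I1" if "v \<in> {x, y, \<zero>\<^bsub>R1\<^esub>}" for v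
    using avP[OF that] E0 one1 by auto
  have buP: "u \<in> carrier R1 \<and> u \<notin> elt_plus_ideal R1 v I1 \<and> u \<notin> I1"
    if u: "u \<in> {\<one>\<^bsub>R1\<^esub>, \<one>\<^bsub>R1\<^esub> \<oplus>\<^bsub>R1\<^esub> x, \<one>\<^bsub>R1\<^esub> \<oplus>\<^bsub>R1\<^esub> y}" and v: "v \<in> {x, y, \<zero>\<^bsub>R1\<^esub>}" for u v
  proof -
    note g = A.good_units[OF loc1 I1 xv yv u]
    show ?thesis using v g E0 by auto
  qed
  define av where "av i = [x, y, \<zero>\<^bsub>R1\<^esub>] ! i" for i
  define bu where "bu j = [\<one>\<^bsub>R1\<^esub>, \<one>\<^bsub>R1\<^esub> \<oplus>\<^bsub>R1\<^esub> x, \<one>\<^bsub>R1\<^esub> \<oplus>\<^bsub>R1\<^esub> y] ! j" for j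
  have av_mem: "av i \<in> {x, y, \<zero>\<^bsub>R1\<^esub>}" if "i<3" for i
    using less3_cases[OF that] by (auto simp: av_def)
  have bu_mem: "bu j \<in> {\<one>\<^bsub>R1\<^esub>, \<one>\<^bsub>R1\<^esub> \<oplus>\<^bsub>R1\<^esub> x, \<one>\<^bsub>R1\<^esub> \<oplus>\<^bsub>R1\<^esub> y}" if "j<3" for j
    using less3_cases[OF that] by (auto simp: bu_def)
  have x0: "x \<noteq> \<zero>\<^bsub>R1\<^esub>" using xc zero1 by blast
  have y0: "y \<noteq> \<zero>\<^bsub>R1\<^esub>" using yc zero1 by blast
  have canc: "a = b" if "\<one>\<^bsub>R1\<^esub> \<oplus>\<^bsub>R1\<^esub> a = \<one>\<^bsub>R1\<^esub> \<oplus>\<^bsub>R1\<^esub> b" "a \<in> carrier R1" "b \<in> carrier R1" for a b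
    using that A.add.l_cancel[of "\<one>\<^bsub>R1\<^esub>" a b] by simp
  have b01: "\<one>\<^bsub>R1\<^esub> \<noteq> \<one>\<^bsub>R1\<^esub> \<oplus>\<^bsub>R1\<^esub> x"
    using canc[of x "\<zero>\<^bsub>R1\<^esub>"] xc x0 by auto
  have b02: "\<one>\<^bsub>R1\<^esub> \<noteq> \<one>\<^bsub>R1\<^esub> \<oplus>\<^bsub>R1\<^esub> y"
    using canc[of y "\<zero>\<^bsub>R1\<^esub>"] yc y0 by auto
  have b12: "\<one>\<^bsub>R1\<^esub> \<oplus>\<^bsub>R1\<^esub> x \<noteq> \<one>\<^bsub>R1\<^esub> \<oplus>\<^bsub>R1\<^esub> y"
    using canc[of x y] xc yc xy by auto
  have o2z: "\<one>\<^bsub>R2\<^esub> \<noteq> \<zero>\<^bsub>R2\<^esub>" using one2 zero2 by auto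
  have vert_a: "(v, \<one>\<^bsub>R2\<^esub>) \<in> gverts (RDirProd R1 R2) (I1 \<times> I2)" if "v \<in> {x, y, \<zero>\<^bsub>R1\<^esub>}" for v
    unfolding RDP_gverts using avQ[OF that] one2
    by (intro conjI prod_ne_carrier[of "\<one>\<^bsub>R1\<^esub>" R1 "\<one>\<^bsub>R2\<^esub>" R2]) auto
  have vert_b: "(u, \<zero>\<^bsub>R2\<^esub>) \<in> gverts (RDirProd R1 R2) (I1 \<times> I2)"
    if "u \<in> {\<one>\<^bsub>R1\<^esub>, \<one>\<^bsub>R1\<^esub> \<oplus>\<^bsub>R1\<^esub> x, \<one>\<^bsub>R1\<^esub> \<oplus>\<^bsub>R1\<^esub> y}" for u
    unfolding RDP_gverts E20 using buP[OF that, of x] one2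
    by (intro conjI prod_ne_carrier[of "\<one>\<^bsub>R1\<^esub>" R1 "\<one>\<^bsub>R2\<^esub>" R2]) auto
  show ?thesis
  proof (rule K33_not_planar[of "\<lambda>i. (av i, \<one>\<^bsub>R2\<^esub>)" _ "\<lambda>j. (bu j, \<zero>\<^bsub>R2\<^esub>)"])
    fix i :: nat assume "i<3" then show "(av i, \<one>\<^bsub>R2\<^esub>) \<in> gverts (RDirProd R1 R2) (I1 \<times> I2)"
      using vert_a av_mem by blast
  next
    fix j :: nat assume "j<3" then show "(bu j, \<zero>\<^bsub>R2\<^esub>) \<in> gverts (RDirProd R1 R2) (I1 \<times> I2)"
      using vert_b bu_mem by blast
  next
    fix i k :: nat assume "i<3" "k<3" "(av i, \<one>\<^bsub>R2\<^esub>) = (av k, \<one>\<^bsub>R2\<^esub>)"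
    then show "i = k" using less3_cases[of i] less3_cases[of k] xy x0 y0
      by (auto simp: av_def)
  next
    fix i k :: nat assume "i<3" "k<3" "(bu i, \<zero>\<^bsub>R2\<^esub>) = (bu k, \<zero>\<^bsub>R2\<^esub>)"
    then show "i = k" using less3_cases[of i] less3_cases[of k] b01 b02 b12
      by (auto simp: bu_def)
  next
    fix i j :: nat assume "i<3" "j<3"
    then show "(av i, \<one>\<^bsub>R2\<^esub>) \<noteq> (bu j, \<zero>\<^bsub>R2\<^esub>)" using o2z by simp
  next
    fix i j :: nat assume ij: "i<3" "j<3"
    have v: "av i \<in> {x, y, \<zero>\<^bsub>R1\<^esub>}" and u: "bu j \<in> {\<one>\<^bsub>R1\<^esub>, \<one>\<^bsub>R1\<^esub> \<oplus>\<^bsub>R1\<^esub> x, \<one>\<^bsub>R1\<^esub> \<oplus>\<^bsub>R1\<^esub> y}"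
      using av_mem bu_mem ij by auto
    show "gadj (RDirProd R1 R2) (I1 \<times> I2) (av i, \<one>\<^bsub>R2\<^esub>) (bu j, \<zero>\<^bsub>R2\<^esub>)"
      unfolding RDP_gadj E20 using vert_a[OF v] vert_b[OF u] o2z one2 buP[OF u v] by auto
  qed
qed

lemma case2:
  fixes R1 :: "('a,'m) ring_scheme" and R2 :: "('b,'n) ring_scheme"
  assumes loc2: "local_cring R2" and c1: "cring R1"
    and I1: "ideal I1 R1" "I1 \<noteq> carrier R1" and I2: "ideal I2 R2" "I2 \<noteq> carrier R2"
    and adj: "gadj R2 I2 x y"
  shows "\<not> planar (gverts (RDirProd R1 R2) (I1 \<times> I2)) (gadj (RDirProd R1 R2) (I1 \<times> I2))"
proof -
  interpret A: cring R2 using loc2 unfolding local_cring_def by blast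
  interpret B: cring R1 by (rule c1)
  have xv: "x \<in> gverts R2 I2" and yv: "y \<in> gverts R2 I2" and xy: "x \<noteq> y"
    using adj unfolding gadj_def by auto
  have xc: "x \<in> carrier R2" "x \<notin> I2" and yc: "y \<in> carrier R2" "y \<notin> I2"
    using xv yv unfolding gverts_def by auto
  have one2: "\<one>\<^bsub>R1\<^esub> \<notin> I1" using I1 ideal.one_imp_carrier by blast
  have zero2: "\<zero>\<^bsub>R1\<^esub> \<in> I1" using additive_subgroup.zero_closed[OF ideal.axioms(1)[OF I1(1)]] by simp
  have one1: "\<one>\<^bsub>R2\<^esub> \<notin> I2" using I2 ideal.one_imp_carrier by blast
  have zero1: "\<zero>\<^bsub>R2\<^esub> \<in> I2" using additive_subgroup.zero_closed[OF ideal.axioms(1)[OF I2(1)]] by simp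
  have E0: "elt_plus_ideal R2 \<zero>\<^bsub>R2\<^esub> I2 = I2" by (rule A.ep_zero[OF I2(1)])
  have E20: "elt_plus_ideal R1 \<zero>\<^bsub>R1\<^esub> I1 = I1" by (rule B.ep_zero[OF I1(1)])
  have avP: "v \<in> carrier R2 \<and> \<one>\<^bsub>R2\<^esub> \<notin> elt_plus_ideal R2 v I2 \<and> v \<notin> I2 \<or> v = \<zero>\<^bsub>R2\<^esub>"
    if "v \<in> {x, y, \<zero>\<^bsub>R2\<^esub>}" for v
  proof -
    have "\<one>\<^bsub>R2\<^esub> \<notin> elt_plus_ideal R2 x I2" using A.ep_one[OF xc(1) I2(1)] xv unfolding gverts_def by blast
    moreover have "\<one>\<^bsub>R2\<^esub> \<notin> elt_plus_ideal R2 y I2" using A.ep_one[OF yc(1) I2(1)] yv unfolding gverts_def by blast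
    ultimately show ?thesis using that xc yc by blast
  qed
  have avQ: "v \<in> carrier R2 \<and> \<one>\<^bsub>R2\<^esub> \<notin> elt_plus_ideal R2 v I2" if "v \<in> {x, y, \<zero>\<^bsub>R2\<^esub>}" for v
    using avP[OF that] E0 one1 by auto
  have buP: "u \<in> carrier R2 \<and> u \<notin> elt_plus_ideal R2 v I2 \<and> u \<notin> I2"
    if u: "u \<in> {\<one>\<^bsub>R2\<^esub>, \<one>\<^bsub>R2\<^esub> \<oplus>\<^bsub>R2\<^esub> x, \<one>\<^bsub>R2\<^esub> \<oplus>\<^bsub>R2\<^esub> y}" and v: "v \<in> {x, y, \<zero>\<^bsub>R2\<^esub>}" for u v
  proof -
    note g = A.good_units[OF loc2 I2 xv yv u]
    show ?thesis using v g E0 by auto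
  qed
  define av where "av i = [x, y, \<zero>\<^bsub>R2\<^esub>] ! i" for i
  define bu where "bu j = [\<one>\<^bsub>R2\<^esub>, \<one>\<^bsub>R2\<^esub> \<oplus>\<^bsub>R2\<^esub> x, \<one>\<^bsub>R2\<^esub> \<oplus>\<^bsub>R2\<^esub> y] ! j" for j
  have av_mem: "av i \<in> {x, y, \<zero>\<^bsub>R2\<^esub>}" if "i<3" for i
    using less3_cases[OF that] by (auto simp: av_def)
  have bu_mem: "bu j \<in> {\<one>\<^bsub>R2\<^esub>, \<one>\<^bsub>R2\<^esub> \<oplus>\<^bsub>R2\<^esub> x, \<one>\<^bsub>R2\<^esub> \<oplus>\<^bsub>R2\<^esub> y}" if "j<3" for j
    using less3_cases[OF that] by (auto simp: bu_def)
  have x0: "x \<noteq> \<zero>\<^bsub>R2\<^esub>" using xc zero1 by blast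
  have y0: "y \<noteq> \<zero>\<^bsub>R2\<^esub>" using yc zero1 by blast
  have canc: "a = b" if "\<one>\<^bsub>R2\<^esub> \<oplus>\<^bsub>R2\<^esub> a = \<one>\<^bsub>R2\<^esub> \<oplus>\<^bsub>R2\<^esub> b" "a \<in> carrier R2" "b \<in> carrier R2" for a b
    using that A.add.l_cancel[of "\<one>\<^bsub>R2\<^esub>" a b] by simp
  have b01: "\<one>\<^bsub>R2\<^esub> \<noteq> \<one>\<^bsub>R2\<^esub> \<oplus>\<^bsub>R2\<^esub> x"
    using canc[of x "\<zero>\<^bsub>R2\<^esub>"] xc x0 by auto
  have b02: "\<one>\<^bsub>R2\<^esub> \<noteq> \<one>\<^bsub>R2\<^esub> \<oplus>\<^bsub>R2\<^esub> y"
    using canc[of y "\<zero>\<^bsub>R2\<^esub>"] yc y0 by auto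
  have b12: "\<one>\<^bsub>R2\<^esub> \<oplus>\<^bsub>R2\<^esub> x \<noteq> \<one>\<^bsub>R2\<^esub> \<oplus>\<^bsub>R2\<^esub> y"
    using canc[of x y] xc yc xy by auto
  have o2z: "\<one>\<^bsub>R1\<^esub> \<noteq> \<zero>\<^bsub>R1\<^esub>" using one2 zero2 by auto
  have vert_a: "(\<one>\<^bsub>R1\<^esub>, v) \<in> gverts (RDirProd R1 R2) (I1 \<times> I2)" if "v \<in> {x, y, \<zero>\<^bsub>R2\<^esub>}" for v
    unfolding RDP_gverts using avQ[OF that] one2
    by (intro conjI prod_ne_carrier[of "\<one>\<^bsub>R1\<^esub>" R1 "\<one>\<^bsub>R2\<^esub>" R2]) auto
  have vert_b: "(\<zero>\<^bsub>R1\<^esub>, u) \<in> gverts (RDirProd R1 R2) (I1 \<times> I2)"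
    if "u \<in> {\<one>\<^bsub>R2\<^esub>, \<one>\<^bsub>R2\<^esub> \<oplus>\<^bsub>R2\<^esub> x, \<one>\<^bsub>R2\<^esub> \<oplus>\<^bsub>R2\<^esub> y}" for u
    unfolding RDP_gverts E20 using buP[OF that, of x] one2
    by (intro conjI prod_ne_carrier[of "\<one>\<^bsub>R1\<^esub>" R1 "\<one>\<^bsub>R2\<^esub>" R2]) auto
  show ?thesis
  proof (rule K33_not_planar[of "\<lambda>i. (\<one>\<^bsub>R1\<^esub>, av i)" _ "\<lambda>j. (\<zero>\<^bsub>R1\<^esub>, bu j)"])
    fix i :: nat assume "i<3" then show "(\<one>\<^bsub>R1\<^esub>, av i) \<in> gverts (RDirProd R1 R2) (I1 \<times> I2)"
      using vert_a av_mem by blast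
  next
    fix j :: nat assume "j<3" then show "(\<zero>\<^bsub>R1\<^esub>, bu j) \<in> gverts (RDirProd R1 R2) (I1 \<times> I2)"
      using vert_b bu_mem by blast
  next
    fix i k :: nat assume "i<3" "k<3" "(\<one>\<^bsub>R1\<^esub>, av i) = (\<one>\<^bsub>R1\<^esub>, av k)"
    then show "i = k" using less3_cases[of i] less3_cases[of k] xy x0 y0
      by (auto simp: av_def)
  next
    fix i k :: nat assume "i<3" "k<3" "(\<zero>\<^bsub>R1\<^esub>, bu i) = (\<zero>\<^bsub>R1\<^esub>, bu k)"
    then show "i = k" using less3_cases[of i] less3_cases[of k] b01 b02 b12
      by (auto simp: bu_def)
  next
    fix i j :: nat assume "i<3" "j<3"
    then show "(\<one>\<^bsub>R1\<^esub>, av i) \<noteq> (\<zero>\<^bsub>R1\<^esub>, bu j)" using o2z by simp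
  next
    fix i j :: nat assume ij: "i<3" "j<3"
    have v: "av i \<in> {x, y, \<zero>\<^bsub>R2\<^esub>}" and u: "bu j \<in> {\<one>\<^bsub>R2\<^esub>, \<one>\<^bsub>R2\<^esub> \<oplus>\<^bsub>R2\<^esub> x, \<one>\<^bsub>R2\<^esub> \<oplus>\<^bsub>R2\<^esub> y}"
      using av_mem bu_mem ij by auto
    show "gadj (RDirProd R1 R2) (I1 \<times> I2) (\<one>\<^bsub>R1\<^esub>, av i) (\<zero>\<^bsub>R1\<^esub>, bu j)"
      unfolding RDP_gadj E20 using vert_a[OF v] vert_b[OF u] o2z one2 buP[OF u v] by auto
  qed
qed

theorem theorem3p14:
  fixes R1 :: "('a, 'm) ring_scheme" and R2 :: "('b, 'n) ring_scheme"
    and I1 :: "'a set" and I2 :: "'b set"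
  assumes "local_cring R1" and "local_cring R2"
    and "ideal I1 R1" and "I1 \<noteq> carrier R1"
    and "ideal I2 R2" and "I2 \<noteq> carrier R2"
    and "(\<exists>x y. gadj R1 I1 x y) \<or> (\<exists>x y. gadj R2 I2 x y)"
  shows "\<not> planar (gverts (RDirProd R1 R2) (I1 \<times> I2)) (gadj (RDirProd R1 R2) (I1 \<times> I2))"
proof -
  have c1: "cring R1" and c2: "cring R2" using assms(1,2) unfolding local_cring_def by auto
  from assms(7) show ?thesis
  proof
    assume "\<exists>x y. gadj R1 I1 x y"
    then obtain x y where "gadj R1 I1 x y" by blast
    then show ?thesis using case1[OF assms(1) c2 assms(3,4,5,6)] by blast
  next
    assume "\<exists>x y. gadj R2 I2 x y"
    then obtain x y where "gadj R2 I2 x y" by blast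
    then show ?thesis using case2[OF assms(2) c1 assms(3,4,5,6)] by blast
  qed
qed

end
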